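(* For the anonymous MIS algorithm described in the context, let $\gamma\xrightarrow{t}\gamma'$ be a transition in which $t$ consists either only of Candidacy moves, or only of Withdrawal? moves all performed by nodes of a single connected candidate set of $\gamma$. If $\mathcal{X}$ is an alive connected candidate set of $\gamma$, then either $\mathcal{X}$ vanishes in this transition, or there exists an alive connected candidate set $\mathcal{X}'$ of $\gamma'$ with $\mathcal{X}'\subseteq\mathcal{X}$.
   Context: $G=(V,E)$ is a finite simple undirected graph; $N(u)$ is the open neighbourhood of $u$. A configuration assigns to each node $u$ a value $s_u\in\{\bot,\top\}$ (written $s_u^\gamma$ in configuration $\gamma$). A rule "guard $\to$ command" is enabled on $u$ in $\gamma$ if its guard holds there. A transition $\gamma\xrightarrow{t}\gamma'$ is given by a nonempty set $t$ of moves $(u,r)$ with $r$ enabled on $u$ in $\gamma$, at most one per node, all executed simultaneously from the values in $\gamma$; other nodes keep their values. The algorithm has the rules: (Candidacy) $s_u=\bot\wedge\forall v\in N(u),\ s_v=\bot\ \to\ s_u:=\top$. (Withdrawal?) $s_u=\top\wedge\exists v\in N(u),\ s_v=\top\ \to$ with probability $\frac12$ set $s_u:=\bot$, otherwise leave it unchanged. $\beta(\gamma)=\{u\in V: s_u^\gamma=\top\text{ and }\forall v\in N(u),\ s_v^\gamma=\bot\}$. A set $\mathcal{X}\subseteq V$ is a candidate set of $\gamma$ if every $u\in\mathcal{X}$ has $s_u^\gamma=\top$ and every $v\in N(u)$ with $s_v^\gamma=\top$ belongs to $\mathcal{X}$; it is a connected candidate set if moreover it induces a connected subgraph of $G$.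 A candidate set $\mathcal{X}$ of $\gamma$ is alive in $\gamma$ if Withdrawal? is enabled on at least one node of $\mathcal{X}$ (for connected candidate sets this is equivalent to $|\mathcal{X}|\ge 2$). In a transition $\gamma\to\gamma'$, an alive candidate set $\mathcal{X}$ of $\gamma$ vanishes if every $u\in\mathcal{X}$ satisfies $s_u^{\gamma'}=\bot$ or $u\in\beta(\gamma')$. *)

theory Defs
  imports Main
begin

text \<open>A finite simple undirected graph: vertex set V, adjacency E (symmetric, irreflexive, within V).
  A configuration is s :: 'a \<Rightarrow> bool, with True meaning top and False meaning bottom.\<close>

definition simple_graph :: "'a set \<Rightarrow> ('a \<Rightarrow> 'a \<Rightarrow> bool) \<Rightarrow> bool" where
  "simple_graph V E \<longleftrightarrow> finite V \<and> (\<forall>u v. E u v \<longrightarrow> u \<in> V \<and> v \<in> V)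
     \<and> (\<forall>u v. E u v \<longrightarrow> E v u) \<and> (\<forall>u. \<not> E u u)"

definition nbh :: "'a set \<Rightarrow> ('a \<Rightarrow> 'a \<Rightarrow> bool) \<Rightarrow> 'a \<Rightarrow> 'a set" where
  "nbh V E u = {v \<in> V. E u v}"

datatype rule = Candidacy | Withdrawal

definition cand_guard :: "'a set \<Rightarrow> ('a \<Rightarrow> 'a \<Rightarrow> bool) \<Rightarrow> ('a \<Rightarrow> bool) \<Rightarrow> 'a \<Rightarrow> bool" where
  "cand_guard V E s u \<longleftrightarrow> \<not> s u \<and> (\<forall>v \<in> nbh V E u. \<not> s v)"

definition withdraw_guard :: "'a set \<Rightarrow> ('a \<Rightarrow> 'a \<Rightarrow> bool) \<Rightarrow> ('a \<Rightarrow> bool) \<Rightarrow> 'a \<Rightarrow> bool" where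
  "withdraw_guard V E s u \<longleftrightarrow> s u \<and> (\<exists>v \<in> nbh V E u. s v)"

fun enabled :: "'a set \<Rightarrow> ('a \<Rightarrow> 'a \<Rightarrow> bool) \<Rightarrow> ('a \<Rightarrow> bool) \<Rightarrow> 'a \<Rightarrow> rule \<Rightarrow> bool" where
  "enabled V E s u Candidacy = cand_guard V E s u"
| "enabled V E s u Withdrawal = withdraw_guard V E s u"

text \<open>Candidacy sets the node to top; Withdrawal sets it to bottom or leaves it unchanged
  (the two possible outcomes of the coin flip); all other nodes keep their values.\<close>
definition transition :: "'a set \<Rightarrow> ('a \<Rightarrow> 'a \<Rightarrow> bool) \<Rightarrow> ('a \<Rightarrow> bool) \<Rightarrow> ('a \<times> rule) set \<Rightarrow> ('a \<Rightarrow> bool) \<Rightarrow> bool" where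
  "transition V E s t s' \<longleftrightarrow>
     t \<noteq> {} \<and>
     (\<forall>(u, r) \<in> t. u \<in> V \<and> enabled V E s u r) \<and>
     (\<forall>u r1 r2. (u, r1) \<in> t \<and> (u, r2) \<in> t \<longrightarrow> r1 = r2) \<and>
     (\<forall>u. ((u, Candidacy) \<in> t \<longrightarrow> s' u = True) \<and>
          ((u, Withdrawal) \<in> t \<longrightarrow> (s' u = False \<or> s' u = s u)) \<and>
          ((\<forall>r. (u, r) \<notin> t) \<longrightarrow> s' u = s u))"

definition beta :: "'a set \<Rightarrow> ('a \<Rightarrow> 'a \<Rightarrow> bool) \<Rightarrow> ('a \<Rightarrow> bool) \<Rightarrow> 'a set" where
  "beta V E s = {u \<in> V. s u \<and> (\<forall>v \<in> nbh V E u. \<not> s v)}"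

definition candidate_set :: "'a set \<Rightarrow> ('a \<Rightarrow> 'a \<Rightarrow> bool) \<Rightarrow> ('a \<Rightarrow> bool) \<Rightarrow> 'a set \<Rightarrow> bool" where
  "candidate_set V E s X \<longleftrightarrow> X \<subseteq> V \<and>
     (\<forall>u \<in> X. s u \<and> (\<forall>v \<in> nbh V E u. s v \<longrightarrow> v \<in> X))"

definition induces_connected :: "('a \<Rightarrow> 'a \<Rightarrow> bool) \<Rightarrow> 'a set \<Rightarrow> bool" where
  "induces_connected E X \<longleftrightarrow> X \<noteq> {} \<and>
     (\<forall>u \<in> X. \<forall>v \<in> X. (\<lambda>a b. a \<in> X \<and> b \<in> X \<and> E a b)\<^sup>*\<^sup>* u v)"

definition connected_candidate_set :: "'a set \<Rightarrow> ('a \<Rightarrow> 'a \<Rightarrow> bool) \<Rightarrow> ('a \<Rightarrow> bool) \<Rightarrow> 'a set \<Rightarrow> bool" where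
  "connected_candidate_set V E s X \<longleftrightarrow> candidate_set V E s X \<and> induces_connected E X"

definition alive :: "'a set \<Rightarrow> ('a \<Rightarrow> 'a \<Rightarrow> bool) \<Rightarrow> ('a \<Rightarrow> bool) \<Rightarrow> 'a set \<Rightarrow> bool" where
  "alive V E s X \<longleftrightarrow> candidate_set V E s X \<and> (\<exists>u \<in> X. withdraw_guard V E s u)"

definition vanishes :: "'a set \<Rightarrow> ('a \<Rightarrow> 'a \<Rightarrow> bool) \<Rightarrow> ('a \<Rightarrow> bool) \<Rightarrow> 'a set \<Rightarrow> bool" where
  "vanishes V E s' X \<longleftrightarrow> (\<forall>u \<in> X. \<not> s' u \<or> u \<in> beta V E s')"

end

theory Submission
  imports Defs
begin

lemma path_restrict:
  assumes "R\<^sup>*\<^sup>* a b" "R\<^sup>*\<^sup>* u a"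
  shows "(\<lambda>x y. x \<in> {w. R\<^sup>*\<^sup>* u w} \<and> y \<in> {w. R\<^sup>*\<^sup>* u w} \<and> R x y)\<^sup>*\<^sup>* a b"
  using assms
proof (induction rule: rtranclp.induct)
  case (rtrancl_refl a) then show ?case by simp
next
  case (rtrancl_into_rtrancl a y z)
  have uy: "R\<^sup>*\<^sup>* u y" using rtrancl_into_rtrancl(4,1) by (rule rtranclp_trans)
  have uz: "R\<^sup>*\<^sup>* u z" using uy rtrancl_into_rtrancl(2) by (rule rtranclp.rtrancl_into_rtrancl)
  have IH: "(\<lambda>x y. x \<in> {w. R\<^sup>*\<^sup>* u w} \<and> y \<in> {w. R\<^sup>*\<^sup>* u w} \<and> R x y)\<^sup>*\<^sup>* a y"
    using rtrancl_into_rtrancl(3,4) by blast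
  show ?case
    by (rule rtranclp.rtrancl_into_rtrancl[OF IH]) (simp add: uy uz rtrancl_into_rtrancl(2))
qed

lemma sym_rtranclp:
  assumes "\<And>x y. R x y \<Longrightarrow> R y x" "R\<^sup>*\<^sup>* a b"
  shows "R\<^sup>*\<^sup>* b a"
  using assms(2)
proof (induction rule: rtranclp.induct)
  case (rtrancl_refl a) then show ?case by simp
next
  case (rtrancl_into_rtrancl a y z)
  then show ?case using assms(1) by (meson converse_rtranclp_into_rtranclp)
qed

theorem mainTheorem17:
  fixes V :: "'a set" and E :: "'a \<Rightarrow> 'a \<Rightarrow> bool"
    and s s' :: "'a \<Rightarrow> bool" and t :: "('a \<times> rule) set" and X :: "'a set"
  assumes G: "simple_graph V E"
    and tr: "transition V E s t s'"
    and moves: "(\<forall>(u, r) \<in> t. r = Candidacy) \<or>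
       (\<exists>Y. connected_candidate_set V E s Y \<and> (\<forall>(u, r) \<in> t. r = Withdrawal \<and> u \<in> Y))"
    and X: "connected_candidate_set V E s X" "alive V E s X"
  shows "vanishes V E s' X \<or>
    (\<exists>X'. X' \<subseteq> X \<and> connected_candidate_set V E s' X' \<and> alive V E s' X')"
proof -
  have XV: "X \<subseteq> V" and Xs: "\<And>w. w \<in> X \<Longrightarrow> s w"
    and Xcl: "\<And>w v. w \<in> X \<Longrightarrow> v \<in> nbh V E w \<Longrightarrow> s v \<Longrightarrow> v \<in> X"
    using X(1) unfolding connected_candidate_set_def candidate_set_def by blast+
  have Esym: "\<And>a b. E a b \<Longrightarrow> E b a" and EV: "\<And>a b. E a b \<Longrightarrow> a \<in> V \<and> b \<in> V"
    using G unfolding simple_graph_def by blast+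
  have T1: "\<And>u r. (u, r) \<in> t \<Longrightarrow> enabled V E s u r"
    and T3: "\<And>u. (\<forall>r. (u, r) \<notin> t) \<Longrightarrow> s' u = s u"
  proof -
    have tr': "(\<forall>(u, r) \<in> t. u \<in> V \<and> enabled V E s u r)"
      "\<forall>u. ((\<forall>r. (u, r) \<notin> t) \<longrightarrow> s' u = s u)"
      using tr unfolding transition_def by blast+
    show "\<And>u r. (u, r) \<in> t \<Longrightarrow> enabled V E s u r" using tr'(1) by blast
    show "\<And>u. (\<forall>r. (u, r) \<notin> t) \<Longrightarrow> s' u = s u" using tr'(2) by blast
  qed
  have key: "s v" if w: "w \<in> X" and v: "v \<in> nbh V E w" and sv: "s' v" for w v
  proof (rule ccontr)
    assume ns: "\<not> s v"
    show False
    proof (cases "\<exists>r. (v, r) \<in> t")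
      case False
      then have "s' v = s v" using T3 by blast
      then show False using ns sv by simp
    next
      case True
      then obtain r where r: "(v, r) \<in> t" by blast
      show False
      proof (cases r)
        case Candidacy
        then have "cand_guard V E s v" using T1[OF r] by simp
        moreover have "w \<in> nbh V E v" using v w XV Esym unfolding nbh_def by auto
        ultimately show False using Xs[OF w] unfolding cand_guard_def by blast
      next
        case Withdrawal
        then have "withdraw_guard V E s v" using T1[OF r] by simp
        then show False using ns unfolding withdraw_guard_def by simp
      qed
    qed
  qed
  have s'X: "s w" if "w \<in> X" for w using Xs that by simp
  show ?thesis
  proof (cases "vanishes V E s' X")
    case True then show ?thesis by simp
  next
    case False
    then obtain u where u0: "u \<in> X" "\<not> (\<not> s' u \<or> u \<in> beta V E s')"
      unfolding vanishes_def by blast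
    then obtain v where u: "u \<in> X" "s' u" "v \<in> nbh V E u" "s' v"
      unfolding beta_def using XV by auto
    have vX: "v \<in> X" using key[OF u(1) u(3) u(4)] Xcl u by blast
    define Z where "Z = {w \<in> X. s' w}"
    define R where "R = (\<lambda>a b. a \<in> Z \<and> b \<in> Z \<and> E a b)"
    define X' where "X' = {w. R\<^sup>*\<^sup>* u w}"
    have uZ: "u \<in> Z" using u Z_def by simp
    have X'Z: "X' \<subseteq> Z"
    proof
      fix w assume "w \<in> X'"
      then have "R\<^sup>*\<^sup>* u w" by (simp add: X'_def)
      then show "w \<in> Z" using uZ by (induction rule: rtranclp.induct) (auto simp: R_def)
    qed
    have Rsym: "\<And>a b. R a b \<Longrightarrow> R b a" using Esym by (auto simp: R_def)
    have uX': "u \<in> X'" by (simp add: X'_def)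
    have cand: "candidate_set V E s' X'"
      unfolding candidate_set_def
    proof (intro conjI ballI allI impI)
      show "X' \<subseteq> V" using X'Z XV Z_def by auto
    next
      fix w assume w: "w \<in> X'"
      then show "s' w" using X'Z Z_def by auto
    next
      fix w y assume w: "w \<in> X'" and y: "y \<in> nbh V E w" and sy: "s' y"
      have wX: "w \<in> X" "w \<in> Z" using w X'Z Z_def by auto
      have "y \<in> X" using key[OF wX(1) y sy] Xcl[OF wX(1) y] by blast
      then have "y \<in> Z" using sy Z_def by simp
      then have "R w y" using wX y unfolding R_def nbh_def by auto
      then show "y \<in> X'" using w X'_def by (simp add: rtranclp.rtrancl_into_rtrancl)
    qed
    have conn: "induces_connected E X'"
      unfolding induces_connected_def
    proof (intro conjI ballI)
      show "X' \<noteq> {}" using uX' by blast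
    next
      fix a b assume a: "a \<in> X'" and b: "b \<in> X'"
      have ua: "R\<^sup>*\<^sup>* u a" and ub: "R\<^sup>*\<^sup>* u b" using a b X'_def by auto
      have "R\<^sup>*\<^sup>* a b" using sym_rtranclp[OF Rsym ua] ub by (meson rtranclp_trans)
      from path_restrict[OF this ua]
      show "(\<lambda>x y. x \<in> X' \<and> y \<in> X' \<and> E x y)\<^sup>*\<^sup>* a b"
        unfolding X'_def
        by (rule rtranclp_mono[THEN predicate2D, rotated]) (auto simp: R_def)
    qed
    have vZ: "v \<in> Z" using vX u Z_def by simp
    have "withdraw_guard V E s' u" using u unfolding withdraw_guard_def by blast
    then have "alive V E s' X'" using cand uX' unfolding alive_def by blast
    then show ?thesis using cand conn X'Z Z_def
      unfolding connected_candidate_set_def by blast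
  qed
qed

end
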